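(* Let $\hat{\mathbb{N}}$ be the set of odd integers $n\ge 3$, let $n \in \hat{\mathbb{N}}$ and $M \subseteq \hat{\mathbb{N}} \setminus \{n\}$. Then $\mathrm{pPol}\, R^{0,2}_n \not\supseteq \bigcap_{m \in M} \mathrm{pPol}\, R^{0,2}_m$.
   Context: Partial functions are on $\{0,1\}$: an $n$-ary partial function is a map $f:\operatorname{dom} f\to\{0,1\}$ with $\operatorname{dom} f\subseteq\{0,1\}^n$; $P_{\mathbf{2}}$ is the set of all of them, and an empty intersection of subsets of $P_{\mathbf{2}}$ is understood as $P_{\mathbf{2}}$. For $\rho\subseteq\{0,1\}^h$, $\mathrm{pPol}\,\rho$ is the set of partial functions $f$ such that for every $h\times n$ matrix whose rows lie in $\operatorname{dom} f$ and whose columns lie in $\rho$, the column obtained by applying $f$ row-wise lies in $\rho$. Let $\rho_{0,2}=\{(0,0),(0,1),(1,0)\}$. For $n\ge2$, $R^{0,2}_{C,n}=\{(x_1,\dots,x_n)\in\{0,1\}^n: (x_i,x_{i+1})\in\rho_{0,2}\text{ for } i\in[n], \text{ with } x_{n+1}:=x_1\}$, $R^{0,2}_{K,n}=\{(x_1,\dots,x_n): (x_i,x_j)\in\rho_{0,2}\text{ for all } i\ne j\}$, and $R^{0,2}_n=R^{0,2}_{C,n}\times R^{0,2}_{K,n}\subseteq\{0,1\}^{2n}$ (tuples $(x_1,\dots,x_{2n})$ with $(x_1,\dots,x_n)\in R^{0,2}_{C,n}$ and $(x_{n+1},\dots,x_{2n})\in R^{0,2}_{K,n}$). *)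

theory Defs
  imports Main
begin

text \<open>Elements of {0,1} are represented by bool (False = 0, True = 1).
  Tuples in {0,1}^h are bool lists of length h.
  An n-ary partial function is a pair (n, f) with f :: bool list => bool option
  whose domain (where f is defined) consists of lists of length n.\<close>

type_synonym pfun = "nat \<times> (bool list \<Rightarrow> bool option)"

definition P2 :: "pfun set" where
  "P2 = {(n, f). dom f \<subseteq> {xs. length xs = n}}"

text \<open>pPol of an h-ary relation rho: every h x n matrix given by its list of h rows,
  rows in dom f, columns in rho, yields the column of values in rho.\<close>
definition pPol :: "nat \<Rightarrow> bool list set \<Rightarrow> pfun set" where
  "pPol h \<rho> = {(n, f) \<in> P2. \<forall>rows. length rows = h \<and> (\<forall>r\<in>set rows. r \<in> dom f)
      \<and> (\<forall>j<n. map (\<lambda>r. r ! j) rows \<in> \<rho>)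
      \<longrightarrow> map (\<lambda>r. the (f r)) rows \<in> \<rho>}"

definition rho02 :: "(bool \<times> bool) set" where
  "rho02 = {(False, False), (False, True), (True, False)}"

definition RC02 :: "nat \<Rightarrow> bool list set" where
  "RC02 n = {xs. length xs = n \<and> (\<forall>i<n. (xs ! i, xs ! ((i + 1) mod n)) \<in> rho02)}"

definition RK02 :: "nat \<Rightarrow> bool list set" where
  "RK02 n = {xs. length xs = n \<and> (\<forall>i<n. \<forall>j<n. i \<noteq> j \<longrightarrow> (xs ! i, xs ! j) \<in> rho02)}"

definition R02 :: "nat \<Rightarrow> bool list set" where
  "R02 n = {xs @ ys | xs ys. xs \<in> RC02 n \<and> ys \<in> RK02 n}"

definition Nhat :: "nat set" where
  "Nhat = {n. odd n \<and> 3 \<le> n}"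

end

theory Submission
  imports Defs
begin



definition adj :: "nat \<Rightarrow> nat \<Rightarrow> nat \<Rightarrow> bool" where
  "adj n a b \<longleftrightarrow> (a+1) mod n = b \<or> (b+1) mod n = a"
definition compat :: "nat \<Rightarrow> nat \<Rightarrow> nat \<Rightarrow> bool" where
  "compat n u w \<longleftrightarrow> u = w \<or> (u<n \<and> w<n \<and> \<not> adj n u w) \<or> ((u<n) \<noteq> (w<n))"
definition colsL :: "nat \<Rightarrow> (nat \<times> nat) list" where
  "colsL n = filter (\<lambda>(u,w). compat n u w) (List.product [0..<2*n] [0..<2*n])"
definition rowv :: "nat \<Rightarrow> nat \<Rightarrow> bool list" where
  "rowv n v = map (\<lambda>(u,w). v=u \<or> v=w) (colsL n)"
definition fw :: "nat \<Rightarrow> bool list \<Rightarrow> bool option" where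
  "fw n xs = (if xs \<in> rowv n ` {..<2*n} then Some (xs = rowv n 0 \<or> xs = rowv n 1) else None)"

lemma compat_sym: "compat n u w = compat n w u"
  unfolding compat_def adj_def by auto

lemma rho02_iff: "(a,b) \<in> rho02 \<longleftrightarrow> \<not>(a \<and> b)"
  unfolding rho02_def by (cases a; cases b; auto)

lemma inter_iff:
  assumes "u < 2*n" "v < 2*n"
  shows "(\<exists>j<length (colsL n). rowv n u ! j \<and> rowv n v ! j) \<longleftrightarrow> compat n u v"
proof
  assume "\<exists>j<length (colsL n). rowv n u ! j \<and> rowv n v ! j"
  then obtain j where j: "j < length (colsL n)" "rowv n u ! j" "rowv n v ! j" by blast
  obtain a b where ab: "colsL n ! j = (a,b)" by fastforce
  have "(a,b) \<in> set (colsL n)" using j(1) ab by (metis nth_mem)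
  then have c: "compat n a b" unfolding colsL_def by auto
  have "u = a \<or> u = b" "v = a \<or> v = b" using j ab unfolding rowv_def by auto
  then show "compat n u v" using c compat_sym[of n a b] unfolding compat_def by auto
next
  assume "compat n u v"
  then have "(u,v) \<in> set (colsL n)" using assms unfolding colsL_def by auto
  then obtain j where "j < length (colsL n)" "colsL n ! j = (u,v)" by (metis in_set_conv_nth)
  then show "\<exists>j<length (colsL n). rowv n u ! j \<and> rowv n v ! j" unfolding rowv_def by auto
qed

lemma rowv_inj:
  assumes "u < 2*n" "v < 2*n" "rowv n u = rowv n v" shows "u = v"
proof -
  have "compat n u u" unfolding compat_def by simp
  then obtain j where "j<length (colsL n)" "rowv n u ! j" "rowv n u ! j"
    using inter_iff[OF assms(1) assms(1)] by blast
  then have "\<exists>j<length (colsL n). rowv n u ! j \<and> rowv n v ! j" using assms(3) by metis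
  then have c: "compat n u v" using inter_iff assms by blast
  show ?thesis
  proof (rule ccontr)
    assume "u \<noteq> v"
    have "(u,u) \<in> set (colsL n)" using \<open>compat n u u\<close> assms unfolding colsL_def by auto
    then obtain j where j: "j<length (colsL n)" "colsL n ! j = (u,u)" by (metis in_set_conv_nth)
    then have "rowv n u ! j" "\<not> rowv n v ! j" using \<open>u\<noteq>v\<close> unfolding rowv_def by auto
    then show False using assms(3) by simp
  qed
qed

lemma fw_rowv: assumes "v < 2*n" "2 \<le> n" shows "fw n (rowv n v) = Some (v < 2)"
proof -
  have "rowv n v = rowv n 0 \<longleftrightarrow> v = 0" using rowv_inj[of v n 0] assms by auto
  moreover have "rowv n v = rowv n 1 \<longleftrightarrow> v = 1" using rowv_inj[of v n 1] assms by auto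
  ultimately show ?thesis using assms unfolding fw_def by auto
qed

lemma R02_iff:
  assumes "length zs = 2*m"
  shows "zs \<in> R02 m \<longleftrightarrow> (\<forall>i<m. \<not>(zs!i \<and> zs!((i+1) mod m))) \<and>
     (\<forall>i<m. \<forall>i'<m. i\<noteq>i' \<longrightarrow> \<not>(zs!(m+i) \<and> zs!(m+i')))"
proof
  assume "zs \<in> R02 m"
  then obtain xs ys where "zs = xs @ ys" "xs \<in> RC02 m" "ys \<in> RK02 m" unfolding R02_def by blast
  then show "(\<forall>i<m. \<not>(zs!i \<and> zs!((i+1) mod m))) \<and>
     (\<forall>i<m. \<forall>i'<m. i\<noteq>i' \<longrightarrow> \<not>(zs!(m+i) \<and> zs!(m+i')))"
    unfolding RC02_def RK02_def rho02_iff by (auto simp: nth_append)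
next
  assume h: "(\<forall>i<m. \<not>(zs!i \<and> zs!((i+1) mod m))) \<and>
     (\<forall>i<m. \<forall>i'<m. i\<noteq>i' \<longrightarrow> \<not>(zs!(m+i) \<and> zs!(m+i')))"
  have "take m zs \<in> RC02 m" unfolding RC02_def rho02_iff using h assms by auto
  moreover have "drop m zs \<in> RK02 m" unfolding RK02_def rho02_iff using h assms by auto
  ultimately show "zs \<in> R02 m" unfolding R02_def
    by (metis (mono_tags, lifting) append_take_drop_id mem_Collect_eq)
qed



lemma sum_rot: "(\<Sum>t<m. (g::nat\<Rightarrow>int) ((t+1) mod m)) = (\<Sum>t<m. g t)"
proof (cases m)
  case 0 then show ?thesis by simp
next
  case (Suc k)
  have "(\<Sum>t<Suc k. g ((t+1) mod Suc k)) = (\<Sum>t<k. g ((t+1) mod Suc k)) + g 0"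
    by (simp add: sum.lessThan_Suc)
  also have "(\<Sum>t<k. g ((t+1) mod Suc k)) = (\<Sum>t<k. g (Suc t))"
    by (rule sum.cong) auto
  finally have "(\<Sum>t<Suc k. g ((t+1) mod Suc k)) = (\<Sum>t<k. g (Suc t)) + g 0" .
  moreover have "(\<Sum>t<Suc k. g t) = g 0 + (\<Sum>t<k. g (Suc t))" by (rule sum.lessThan_Suc_shift)
  ultimately show ?thesis using Suc by simp
qed

lemma sum_odd_parity: "(\<forall>t<m. odd ((E::nat\<Rightarrow>int) t)) \<Longrightarrow> even (\<Sum>t<m. E t) = even m"
  by (induction m) auto

lemma adj_step:
  assumes "a < n" "b < n" "adj n a b"
  shows "\<exists>e k. (e = 1 \<or> e = -1) \<and> int b - int a = e + int n * k"
proof -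
  consider "(a+1) mod n = b" | "(b+1) mod n = a" using assms(3) unfolding adj_def by blast
  then show ?thesis
  proof cases
    case 1
    show ?thesis
    proof (cases "a+1 < n")
      case True then have "b = a+1" using 1 by simp
      then show ?thesis by (intro exI[of _ 1] exI[of _ 0]) simp
    next
      case False then have "a+1 = n" using assms by simp
      then have "b = 0" using 1 by simp
      then show ?thesis using \<open>a+1=n\<close> by (intro exI[of _ 1] exI[of _ "-1"]) simp
    qed
  next
    case 2
    show ?thesis
    proof (cases "b+1 < n")
      case True then have "a = b+1" using 2 by simp
      then show ?thesis by (intro exI[of _ "-1"] exI[of _ 0]) simp
    next
      case False then have "b+1 = n" using assms by simp
      then have "a = 0" using 2 by simp
      then show ?thesis using \<open>b+1=n\<close> by (intro exI[of _ "-1"] exI[of _ 1]) simp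
    qed
  qed
qed

lemma no_short_odd_walk:
  assumes "odd m" "m < n" "\<forall>t<m. w t < n" "\<forall>t<m. adj n (w t) (w ((t+1) mod m))"
  shows False
proof -
  have "\<forall>t<m. \<exists>e k. (e = 1 \<or> e = -1) \<and> int (w ((t+1) mod m)) - int (w t) = e + int n * k"
  proof (intro allI impI)
    fix t assume t: "t < m"
    then have "(t+1) mod m < m" by simp
    then show "\<exists>e k. (e = 1 \<or> e = -1) \<and> int (w ((t+1) mod m)) - int (w t) = e + int n * k"
      using adj_step assms t by blast
  qed
  then obtain E K where EK: "\<forall>t<m. (E t = 1 \<or> E t = -1) \<and>
      int (w ((t+1) mod m)) - int (w t) = E t + int n * K t"
    by metis
  have "(\<Sum>t<m. int (w ((t+1) mod m)) - int (w t)) = 0"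
    using sum_rot[of "\<lambda>t. int (w t)" m] by (simp add: sum_subtractf)
  also have "(\<Sum>t<m. int (w ((t+1) mod m)) - int (w t)) = (\<Sum>t<m. E t + int n * K t)"
    using EK by (intro sum.cong) auto
  finally have s: "(\<Sum>t<m. E t) = - (int n * (\<Sum>t<m. K t))"
    by (simp add: sum.distrib sum_distrib_left)
  have "\<bar>\<Sum>t<m. E t\<bar> \<le> (\<Sum>t<m. \<bar>E t\<bar>)" by (rule sum_abs)
  also have "\<dots> = (\<Sum>t<m. 1)" using EK by (intro sum.cong) auto
  finally have ab: "\<bar>\<Sum>t<m. E t\<bar> \<le> int m" by simp
  have z: "(\<Sum>t<m. E t) = 0"
  proof (rule ccontr)
    assume nz: "(\<Sum>t<m. E t) \<noteq> 0"
    then have "(\<Sum>t<m. K t) \<noteq> 0" using s by auto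
    then have "\<bar>\<Sum>t<m. K t\<bar> \<ge> 1" by linarith
    then have "int n * 1 \<le> int n * \<bar>\<Sum>t<m. K t\<bar>" by (intro mult_left_mono) auto
    then have "\<bar>int n * (\<Sum>t<m. K t)\<bar> \<ge> int n"
      by (simp add: abs_mult)
    then show False using s ab assms(2) by simp
  qed
  have "\<forall>t<m. odd (E t)" using EK by auto
  then have "even (\<Sum>t<m. E t) = even m" by (rule sum_odd_parity)
  then show False using z assms(1) by simp
qed



lemma noncompat:
  assumes "\<not> compat n a b"
  shows "a \<noteq> b" "(a<n) = (b<n)" "a < n \<Longrightarrow> adj n a b"
  using assms unfolding compat_def by auto

lemma comb:
  fixes vt :: "nat \<Rightarrow> nat"
  assumes n: "odd n" "3 \<le> n" and m: "odd m" "3 \<le> m" "m \<noteq> n"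
    and bd: "\<forall>t<2*m. vt t < 2*n"
    and A: "\<forall>i<m. \<not> compat n (vt i) (vt ((i+1) mod m))"
    and B: "\<forall>i<m. \<forall>i'<m. i\<noteq>i' \<longrightarrow> \<not> compat n (vt (m+i)) (vt (m+i'))"
  shows "(\<forall>i<m. \<not>(vt i<2 \<and> vt((i+1) mod m)<2)) \<and>
         (\<forall>i<m. \<forall>i'<m. i\<noteq>i' \<longrightarrow> \<not>(vt(m+i)<2 \<and> vt(m+i')<2))"
proof (cases "m < n")
  case False
  then have mn: "n < m" using m by simp
  let ?S = "(\<lambda>i. vt (m+i)) ` {..<m}"
  have inj: "inj_on (\<lambda>i. vt (m+i)) {..<m}"
    unfolding inj_on_def using B noncompat(1) by blast
  then have cS: "card ?S = m" by (simp add: card_image)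
  have side: "\<forall>i<m. (vt (m+i) < n) = (vt m < n)"
  proof (intro allI impI)
    fix i assume "i < m"
    show "(vt (m+i) < n) = (vt m < n)"
    proof (cases "i = 0")
      case True then show ?thesis by simp
    next
      case False
      then have "\<not> compat n (vt (m+i)) (vt (m+0))" using B[rule_format, of i 0] \<open>i<m\<close> m by simp
      then show ?thesis using noncompat(2) by fastforce
    qed
  qed
  have "card ?S \<le> n"
  proof (cases "vt m < n")
    case True
    then have "?S \<subseteq> {..<n}" using side by auto
    then show ?thesis by (metis card_lessThan card_mono finite_lessThan)
  next
    case False
    then have "?S \<subseteq> {n..<2*n}" using side bd by auto
    then have "card ?S \<le> card {n..<2*n}" by (intro card_mono) auto
    then show ?thesis by simp
  qed
  then show ?thesis using cS mn by simp
next
  case True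
  have side: "\<forall>i<m. (vt i < n) = (vt 0 < n)"
  proof (intro allI impI)
    fix i assume "i < m"
    then show "(vt i < n) = (vt 0 < n)"
    proof (induction i)
      case 0 then show ?case by simp
    next
      case (Suc i)
      then have "(i+1) mod m = Suc i" by simp
      then have "\<not> compat n (vt i) (vt (Suc i))" using A Suc.prems by (metis Suc_lessD)
      then show ?case using noncompat(2) Suc by (metis Suc_lessD)
    qed
  qed
  have part1: "\<forall>i<m. \<not>(vt i<2 \<and> vt((i+1) mod m)<2)"
  proof (cases "vt 0 < n")
    case True
    have "\<forall>t<m. vt t < n" using side True by auto
    moreover have "\<forall>t<m. adj n (vt t) (vt ((t+1) mod m))"
      using A noncompat(3) side True by blast
    ultimately have False using no_short_odd_walk[OF m(1) \<open>m<n\<close>] by blast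
    then show ?thesis ..
  next
    case False
    show ?thesis
    proof (intro allI impI)
      fix i assume "i<m"
      then have "\<not> vt i < n" using side False by simp
      then show "\<not>(vt i<2 \<and> vt((i+1) mod m)<2)" using n by simp
    qed
  qed
  have part2: "\<forall>i<m. \<forall>i'<m. i\<noteq>i' \<longrightarrow> \<not>(vt(m+i)<2 \<and> vt(m+i')<2)"
  proof (intro allI impI notI)
    fix i i' assume ii: "i<m" "i'<m" "i\<noteq>i'" "vt(m+i)<2 \<and> vt(m+i')<2"
    have ne: "vt (m+i) \<noteq> vt (m+i')" using B ii noncompat(1) by blast
    obtain j where j: "j < m" "j \<noteq> i" "j \<noteq> i'"
    proof -
      have "{0,1,2} - {i,i'} \<noteq> {}" using ii(3) by (cases "i = 0"; cases "i = 1"; auto)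
      then obtain j where "j \<in> {0::nat,1,2}" "j \<notin> {i,i'}" by blast
      moreover have "j < m" using \<open>j \<in> {0::nat,1,2}\<close> m by auto
      ultimately show ?thesis using that by blast
    qed
    define w where "w = vt (m+j)"
    have c1: "\<not> compat n (vt (m+i)) w" "\<not> compat n (vt (m+i')) w"
      using B[rule_format, of i j] B[rule_format, of i' j] ii(1,2) j unfolding w_def by auto
    have n4: "4 \<le> n" using True m by linarith
    have "(vt (m+i) = 0 \<and> vt (m+i') = 1) \<or> (vt (m+i) = 1 \<and> vt (m+i') = 0)" using ii(4) ne by linarith
    then have c2: "\<not> compat n 0 w" "\<not> compat n 1 w" using c1 by auto
    have "w < n" "w \<noteq> 0" "w \<noteq> 1" "adj n 0 w" "adj n 1 w"
      using noncompat[OF c2(1)] noncompat[OF c2(2)] n4 by simp_all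
    then have w: "w < n" "w \<noteq> 0" "w \<noteq> 1" "(0+1) mod n = w \<or> (w+1) mod n = 0"
       "(1+1) mod n = w \<or> (w+1) mod n = 1" unfolding adj_def by auto
    have "(w+1) mod n = 0" using w(3,4) n4 by simp
    then have wn: "w + 1 = n" using w(1)
      by (metis Suc_eq_plus1 Suc_leI le_neq_implies_less mod_less nat.distinct(1))
    then have "w = 2" using w(5) n4 by simp
    then show False using wn n4 by simp
  qed
  show ?thesis using part1 part2 by blast
qed



lemma len_rowv: "length (rowv n v) = length (colsL n)" unfolding rowv_def by simp

lemma col_entry: "j < length (colsL n) \<Longrightarrow> colsL n ! j = (u,w) \<Longrightarrow> rowv n v ! j = (v = u \<or> v = w)"
  unfolding rowv_def by simp

lemma in_P2: "(length (colsL n), fw n) \<in> P2"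
  unfolding P2_def fw_def by (auto simp: len_rowv split: if_splits)

lemma preserves:
  assumes n: "odd n" "3 \<le> n" and m: "odd m" "3 \<le> m" "m \<noteq> n"
  shows "(length (colsL n), fw n) \<in> pPol (2*m) (R02 m)"
  unfolding pPol_def
proof (intro CollectI, simp only: case_prod_conv, intro conjI in_P2 allI impI)
  fix rows :: "bool list list"
  let ?L = "length (colsL n)"
  assume h: "length rows = 2*m \<and> (\<forall>r\<in>set rows. r \<in> dom (fw n)) \<and>
     (\<forall>j<?L. map (\<lambda>r. r ! j) rows \<in> R02 m)"
  then have h1: "length rows = 2*m" and h2: "\<forall>r\<in>set rows. r \<in> dom (fw n)"
    and h3: "\<forall>j<?L. map (\<lambda>r. r ! j) rows \<in> R02 m" by blast+
  have "\<forall>t<2*m. \<exists>v. v < 2*n \<and> rows ! t = rowv n v"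
  proof (intro allI impI)
    fix t assume "t < 2*m"
    then have "rows ! t \<in> dom (fw n)" using h by auto
    then show "\<exists>v. v < 2*n \<and> rows ! t = rowv n v" unfolding fw_def by (auto split: if_splits)
  qed
  then obtain vt where vt: "\<forall>t<2*m. vt t < 2*n \<and> rows ! t = rowv n (vt t)" by metis
  have colR1: "\<And>j i. j < ?L \<Longrightarrow> i < m \<Longrightarrow> \<not>(rows!i!j \<and> rows!((i+1) mod m)!j)"
  proof -
    fix j i assume j: "j < ?L" and i: "i < m"
    let ?zs = "map (\<lambda>r. r ! j) rows"
    have "?zs \<in> R02 m" using h3 j by blast
    moreover have "length ?zs = 2*m" using h1 by simp
    ultimately have "\<not>(?zs!i \<and> ?zs!((i+1) mod m))" using R02_iff[of ?zs m] i by blast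
    moreover have mm: "(i+1) mod m < m" using i by simp
    moreover have "i < length rows" "(i+1) mod m < length rows" using h1 i mm by linarith+
    ultimately show "\<not>(rows!i!j \<and> rows!((i+1) mod m)!j)" by simp
  qed
  have colR2: "\<And>j i i'. j < ?L \<Longrightarrow> i < m \<Longrightarrow> i' < m \<Longrightarrow> i \<noteq> i' \<Longrightarrow> \<not>(rows!(m+i)!j \<and> rows!(m+i')!j)"
  proof -
    fix j i i' assume j: "j < ?L" and i: "i < m" "i' < m" "i \<noteq> i'"
    let ?zs = "map (\<lambda>r. r ! j) rows"
    have "?zs \<in> R02 m" using h3 j by blast
    moreover have "length ?zs = 2*m" using h1 by simp
    ultimately have "\<not>(?zs!(m+i) \<and> ?zs!(m+i'))" using R02_iff[of ?zs m] i by blast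
    moreover have "m+i < length rows" "m+i' < length rows" using h1 i by auto
    ultimately show "\<not>(rows!(m+i)!j \<and> rows!(m+i')!j)" by simp
  qed
  have A: "\<forall>i<m. \<not> compat n (vt i) (vt ((i+1) mod m))"
  proof (intro allI impI notI)
    fix i assume i: "i < m" and c: "compat n (vt i) (vt ((i+1) mod m))"
    have mm: "(i+1) mod m < m" using i by simp
    have i2: "i < 2*m" "(i+1) mod m < 2*m" using i mm by linarith+
    then obtain j where j: "j < ?L" "rowv n (vt i) ! j" "rowv n (vt ((i+1) mod m)) ! j"
      using inter_iff[of "vt i" n "vt ((i+1) mod m)"] vt i2 c by auto
    then show False using colR1[OF j(1) i] vt i2 by simp
  qed
  have B: "\<forall>i<m. \<forall>i'<m. i\<noteq>i' \<longrightarrow> \<not> compat n (vt (m+i)) (vt (m+i'))"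
  proof (intro allI impI notI)
    fix i i' assume i: "i < m" "i' < m" "i \<noteq> i'" and c: "compat n (vt (m+i)) (vt (m+i'))"
    have i2: "m+i < 2*m" "m+i' < 2*m" using i by auto
    then obtain j where j: "j < ?L" "rowv n (vt (m+i)) ! j" "rowv n (vt (m+i')) ! j"
      using inter_iff[of "vt (m+i)" n "vt (m+i')"] vt i2 c by auto
    then show False using colR2[OF j(1) i] vt i2 by simp
  qed
  have bd: "\<forall>t<2*m. vt t < 2*n" using vt by blast
  note res = comb[OF n m bd A B]
  let ?z = "map (\<lambda>r. the (fw n r)) rows"
  have z: "\<And>t. t < 2*m \<Longrightarrow> ?z ! t = (vt t < 2)"
  proof -
    fix t assume t: "t < 2*m"
    then have "?z ! t = the (fw n (rows ! t))" using h1 by simp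
    also have "rows ! t = rowv n (vt t)" using vt t by blast
    also have "fw n (rowv n (vt t)) = Some (vt t < 2)" using fw_rowv[of "vt t" n] vt t n by simp
    finally show "?z ! t = (vt t < 2)" by simp
  qed
  have lz: "length ?z = 2*m" using h1 by simp
  have q1: "\<forall>i<m. \<not>(?z!i \<and> ?z!((i+1) mod m))"
  proof (intro allI impI)
    fix i assume i: "i < m"
    then have mm: "(i+1) mod m < m" by simp
    have a1: "i < 2*m" and a2: "(i+1) mod m < 2*m" using i mm by linarith+
    have "\<not>(vt i<2 \<and> vt((i+1) mod m)<2)" using res i by blast
    then show "\<not>(?z!i \<and> ?z!((i+1) mod m))" using z[OF a1] z[OF a2] by simp
  qed
  have q2: "\<forall>i<m. \<forall>i'<m. i\<noteq>i' \<longrightarrow> \<not>(?z!(m+i) \<and> ?z!(m+i'))"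
  proof (intro allI impI)
    fix i i' assume i: "i < m" "i' < m" "i \<noteq> i'"
    then have a1: "m+i < 2*m" and a2: "m+i' < 2*m" by auto
    have "\<not>(vt (m+i)<2 \<and> vt (m+i')<2)" using res i by blast
    then show "\<not>(?z!(m+i) \<and> ?z!(m+i'))" using z[OF a1] z[OF a2] by simp
  qed
  show "?z \<in> R02 m" using R02_iff[OF lz] q1 q2 by blast
qed

lemma fails:
  assumes n: "odd n" "3 \<le> n"
  shows "(length (colsL n), fw n) \<notin> pPol (2*n) (R02 n)"
proof
  let ?L = "length (colsL n)"
  let ?rows = "map (rowv n) [0..<2*n]"
  assume "(length (colsL n), fw n) \<in> pPol (2*n) (R02 n)"
  then have H: "\<And>rows. length rows = 2*n \<and> (\<forall>r\<in>set rows. r \<in> dom (fw n))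
      \<and> (\<forall>j<?L. map (\<lambda>r. r ! j) rows \<in> R02 n)
      \<Longrightarrow> map (\<lambda>r. the (fw n r)) rows \<in> R02 n"
    unfolding pPol_def by blast
  have "\<forall>r\<in>set ?rows. r \<in> dom (fw n)" unfolding fw_def by auto
  moreover have "\<forall>j<?L. map (\<lambda>r. r ! j) ?rows \<in> R02 n"
  proof (intro allI impI)
    fix j assume j: "j < ?L"
    obtain u w where uw: "colsL n ! j = (u,w)" by fastforce
    have "(u,w) \<in> set (colsL n)" using j uw by (metis nth_mem)
    then have c: "compat n u w" "u < 2*n" "w < 2*n" unfolding colsL_def by auto
    let ?c = "map (\<lambda>r. r ! j) ?rows"
    have lc: "length ?c = 2*n" by simp
    have ce: "\<And>t. t < 2*n \<Longrightarrow> ?c ! t = (t = u \<or> t = w)"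
      using col_entry[OF j uw] by simp
    have p1: "\<forall>i<n. \<not>(?c!i \<and> ?c!((i+1) mod n))"
    proof (intro allI impI notI)
      fix i assume i: "i < n" and b: "?c!i \<and> ?c!((i+1) mod n)"
      have i1: "(i+1) mod n < n" using n by simp
      have "i < 2*n" "(i+1) mod n < 2*n" using i i1 by linarith+
      then have b2: "(i = u \<or> i = w)" "((i+1) mod n = u \<or> (i+1) mod n = w)" using b ce by auto
      have ne: "i \<noteq> (i+1) mod n"
      proof (cases "i+1 < n")
        case True then show ?thesis by simp
      next
        case False
        then have "i+1 = n" using i by simp
        then have "(i+1) mod n = 0" by simp
        moreover have "i \<noteq> 0" using \<open>i+1 = n\<close> n by simp
        ultimately show ?thesis by simp
      qed
      have "adj n i ((i+1) mod n)" unfolding adj_def by simp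
      then have "adj n u w" "u < n" "w < n" using b2 ne i i1 unfolding adj_def by auto
      then show False using c(1) ne b2 unfolding compat_def by auto
    qed
    have p2: "\<forall>i<n. \<forall>i'<n. i\<noteq>i' \<longrightarrow> \<not>(?c!(n+i) \<and> ?c!(n+i'))"
    proof (intro allI impI notI)
      fix i i' assume i: "i < n" "i' < n" "i \<noteq> i'" and b: "?c!(n+i) \<and> ?c!(n+i')"
      then have "(n+i = u \<or> n+i = w)" "(n+i' = u \<or> n+i' = w)" using ce[of "n+i"] ce[of "n+i'"] by auto
      then show False using c(1) i unfolding compat_def by auto
    qed
    show "?c \<in> R02 n" using R02_iff[OF lc] p1 p2 by blast
  qed
  moreover have "length ?rows = 2*n" by simp
  ultimately have "map (\<lambda>r. the (fw n r)) ?rows \<in> R02 n" using H[of ?rows] by blast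
  moreover have "length (map (\<lambda>r. the (fw n r)) ?rows) = 2*n" by simp
  moreover have "map (\<lambda>r. the (fw n r)) ?rows ! 0" "map (\<lambda>r. the (fw n r)) ?rows ! ((0+1) mod n)"
    using fw_rowv n by auto
  ultimately have "\<forall>i<n. \<not>(map (\<lambda>r. the (fw n r)) ?rows!i \<and> map (\<lambda>r. the (fw n r)) ?rows!((i+1) mod n))"
    using R02_iff by blast
  then show False using n \<open>map (\<lambda>r. the (fw n r)) ?rows ! 0\<close> \<open>map (\<lambda>r. the (fw n r)) ?rows ! ((0+1) mod n)\<close>
    by (metis gr0I not_numeral_le_zero)
qed

theorem mainTheorem16:
  assumes "n \<in> Nhat" and "M \<subseteq> Nhat - {n}"
  shows "\<not> (P2 \<inter> (\<Inter>m\<in>M. pPol (2 * m) (R02 m)) \<subseteq> pPol (2 * n) (R02 n))"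
proof
  assume S: "P2 \<inter> (\<Inter>m\<in>M. pPol (2 * m) (R02 m)) \<subseteq> pPol (2 * n) (R02 n)"
  have n: "odd n" "3 \<le> n" using assms(1) unfolding Nhat_def by auto
  have "(length (colsL n), fw n) \<in> P2 \<inter> (\<Inter>m\<in>M. pPol (2 * m) (R02 m))"
  proof (intro IntI in_P2 INT_I)
    fix m assume "m \<in> M"
    then have "odd m" "3 \<le> m" "m \<noteq> n" using assms(2) unfolding Nhat_def by auto
    then show "(length (colsL n), fw n) \<in> pPol (2 * m) (R02 m)" using preserves n by blast
  qed
  then show False using S fails[OF n] by blast
qed


end
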